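(* Let $N>0$, $d>0$ be real numbers with $0<N<1$ and $d^{2}\leq N^{-2}-1$. For every real $A>0$, the equation $F(z)+A=0$, where $F(z)=(1-Nz)^{2}\left(1-\frac{d^{2}}{z^{2}-1}\right)$, i.e. the quartic equation $(1-Nz)^{2}(z^{2}-1-d^{2})+A(z^{2}-1)=0$ in the complex variable $z$, has exactly two real roots and two (non-real) complex roots.
   Context: This is the (dimensionless) dispersion relation for Kelvin–Helmholtz perturbations of two thin co-flowing layers (a pure incompressible fluid and a bubbly fluid): $z=ad/(u_{20}-c)$ with $c$ the phase velocity, $d=1/(bk)$ the dimensionless wave length, $N=M/d$ with $M=(u_{20}-u_{10})/a$, and $A=h_0\rho_{20}/((H_0-h_0)\rho_{10})>0$. The equation $F(z)+A=0$ is regarded as the fourth-degree polynomial equation obtained by multiplying by $z^{2}-1$; roots are counted with multiplicity. *)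

theory Defs
  imports Complex_Main "HOL-Computational_Algebra.Polynomial"
begin

definition kh_quartic :: "real \<Rightarrow> real \<Rightarrow> real \<Rightarrow> complex poly" where
  "kh_quartic N d A =
     [:1, - complex_of_real N:] ^ 2 * [:- complex_of_real (1 + d^2), 0, 1:]
     + smult (complex_of_real A) [:-1, 0, 1:]"

end

theory Submission
  imports Defs "HOL-Computational_Algebra.Fundamental_Theorem_Algebra"
begin

definition Pr :: "real \<Rightarrow> real \<Rightarrow> real \<Rightarrow> real \<Rightarrow> real" where
  "Pr N d A x = (1-N*x)^2*(x^2-1-d^2) + A*(x^2-1)"
definition Pd :: "real \<Rightarrow> real \<Rightarrow> real \<Rightarrow> real \<Rightarrow> real" where
  "Pd N d A x = -2*N*(1-N*x)*(x^2-1-d^2) + 2*x*(1-N*x)^2 + 2*A*x"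

lemma kq: "kh_quartic N d A = [: -(1+d^2) - A, 2*N*(1+d^2), 1 - (1+d^2)*N^2 + A, -2*N, N^2 :]"
  unfolding kh_quartic_def
  by (simp add: power2_eq_square algebra_simps)

lemma poly_kq: "poly (kh_quartic N d A) (complex_of_real x) = complex_of_real (Pr N d A x)"
  unfolding kh_quartic_def Pr_def
  by (simp add: power2_eq_square algebra_simps)

lemma poly_dkq: "poly (pderiv (kh_quartic N d A)) (complex_of_real x) = complex_of_real (Pd N d A x)"
  unfolding kq Pd_def
  by (simp add: pderiv_pCons power2_eq_square algebra_simps)

lemma deriv_ident: "(x^2-1)*Pd N d A x - 2*x*Pr N d A x = 2*(1-N*x)*(-N*(x^2-1)^2 + d^2*(x-N))"
  unfolding Pr_def Pd_def
  by (simp add: algebra_simps power2_eq_square power4_eq_xxxx)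
lemma sq_gt1: "x < -1 \<Longrightarrow> x^2 > (1::real)"
proof -
  assume "x < -1"
  hence "1 < -x" by simp
  hence "1 < (-x)^2" using one_less_power[of "-x" 2] by simp
  thus ?thesis by simp
qed

lemma sq_gt1': "1 < x \<Longrightarrow> x^2 > (1::real)"
  using one_less_power[of x 2] by simp

lemma dneg:
  assumes "0<N" "x < -1" "Pr N d A x = 0"
  shows "Pd N d A x \<noteq> 0"
proof
  assume "Pd N d A x = 0"
  hence "2*(1-N*x)*(-N*(x^2-1)^2 + d^2*(x-N)) = 0" using deriv_ident[of x N d A] assms by simp
  moreover have "N*x < 0" using assms by (simp add: mult_pos_neg)
  hence "1-N*x > 0" by linarith
  moreover have "-N*(x^2-1)^2 + d^2*(x-N) < 0"
  proof -
    have "x^2 > 1" using sq_gt1 assms by blast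
    hence "(x^2-1)^2 > 0" by simp
    hence "-N*(x^2-1)^2 < 0" using assms by simp
    moreover have "d^2*(x-N) \<le> 0" using assms by (simp add: mult_nonneg_nonpos)
    ultimately show ?thesis by linarith
  qed
  ultimately show False by simp
qed
lemma mid_neg:
  assumes "0<N" "N<1" "0<d" "0<A" "\<bar>x\<bar> \<le> 1"
  shows "Pr N d A x < 0"
proof -
  have x2: "x^2 \<le> 1" using assms by (simp add: abs_square_le_1)
  have "N*x \<le> N*\<bar>x\<bar>" using assms by (simp add: mult_left_mono)
  also have "\<dots> \<le> N" using assms mult_left_mono[of "\<bar>x\<bar>" 1 N] by simp
  finally have "1 - N*x > 0" using assms by linarith
  hence a: "(1-N*x)^2 > 0" by simp
  have "d^2 > 0" using assms by simp
  hence b: "x^2-1-d^2 < 0" using x2 by linarith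
  have "(1-N*x)^2*(x^2-1-d^2) < 0" using a b by (simp add: mult_pos_neg)
  moreover have "A*(x^2-1) \<le> 0" using assms x2 by (simp add: mult_nonneg_nonpos)
  ultimately show ?thesis unfolding Pr_def by linarith
qed

lemma out_pos:
  assumes "0<d" "0<A" "x^2 \<ge> 1+d^2"
  shows "Pr N d A x > 0"
proof -
  have "(1-N*x)^2*(x^2-1-d^2) \<ge> 0" using assms by simp
  moreover have "d^2 > 0" using assms by simp
  hence "x^2-1 > 0" using assms by linarith
  hence "A*(x^2-1) > 0" using assms by simp
  ultimately show ?thesis unfolding Pr_def by linarith
qed
lemma Ny_lt1:
  fixes N y d :: real
  assumes "0<N" "0 < y" "y^2 < 1+d^2" "N^2*(1+d^2) \<le> 1"
  shows "N*y < 1"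
proof (rule ccontr)
  assume "\<not> N*y<1"
  hence "1 \<le> N*y" by linarith
  hence "1 \<le> (N*y)^2" using one_le_power[of "N*y" 2] by simp
  also have "\<dots> = N^2*y^2" by (simp add: power_mult_distrib)
  also have "\<dots> < N^2*(1+d^2)" using assms by simp
  finally show False using assms by simp
qed

lemma uniq_pos:
  assumes "0<N" "0<A" "1<x" "x<y" "y^2 < 1+d^2" "N^2*(1+d^2) \<le> 1"
    and "Pr N d A x = 0" "Pr N d A y = 0"
  shows False
proof -
  have y1: "N*y < 1" using Ny_lt1[of N y d] assms by simp
  have nx: "1-N*x > 1-N*y" using assms by simp
  have ny: "1-N*y > 0" using y1 by simp
  have s1: "(1-N*x)^2 > (1-N*y)^2" using nx ny power_strict_mono[of "1-N*y" "1-N*x" 2] by simp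
  have xy2: "x^2 < y^2" using assms power_strict_mono[of x y 2] by simp
  have e: "1+d^2-x^2 > 1+d^2-y^2" "1+d^2-y^2 > 0" using assms xy2 by auto
  have "(1-N*y)^2*(1+d^2-y^2) < (1-N*x)^2*(1+d^2-y^2)" using s1 e by simp
  also have "\<dots> < (1-N*x)^2*(1+d^2-x^2)" using e nx ny by simp
  finally have lt: "(1-N*y)^2*(1+d^2-y^2) < (1-N*x)^2*(1+d^2-x^2)" .
  moreover have "A*(x^2-1) = (1-N*x)^2*(1+d^2-x^2)" "A*(y^2-1) = (1-N*y)^2*(1+d^2-y^2)"
    using assms unfolding Pr_def by (simp_all add: algebra_simps)
  moreover have "A*(x^2-1) < A*(y^2-1)" using assms xy2 by simp
  ultimately show False by linarith
qed

lemma uniq_neg: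
  assumes "0<N" "0<A" "x<y" "y < -1" "x^2 < 1+d^2"
    and "Pr N d A x = 0" "Pr N d A y = 0"
  shows False
proof -
  have bx: "(1-N*x)^2*(y^2-1) < (1-N*y)^2*(x^2-1)"
  proof -
    define u where "u = -x"
    define v where "v = -y"
    have uv: "1 < v" "v < u" using assms u_def v_def by auto
    have eq: "(1+N*u)^2*(v^2-1) - (1+N*v)^2*(u^2-1)
          = (v-u)*((1+N*u)*v + (1+N*v)*u) + N*(v-u)*((1+N*v)+(1+N*u))"
      by (simp add: algebra_simps power2_eq_square)
    have p1: "(1+N*u)*v + (1+N*v)*u > 0" using uv assms by (simp add: add_pos_pos)
    have p2: "(1+N*v)+(1+N*u) > 0" using uv assms by (simp add: add_pos_pos)
    have "(v-u)*((1+N*u)*v + (1+N*v)*u) < 0" using uv p1 by (simp add: mult_neg_pos)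
    moreover have "N*(v-u)*((1+N*v)+(1+N*u)) < 0" using uv p2 assms
      by (simp add: mult_neg_pos mult_pos_neg)
    ultimately have "(1+N*u)^2*(v^2-1) - (1+N*v)^2*(u^2-1) < 0" using eq by linarith
    thus ?thesis unfolding u_def v_def by (simp add: algebra_simps)
  qed
  have y2: "y^2 - 1 > 0" "x^2-1>0" using assms sq_gt1[of x] sq_gt1[of y] by auto
  have xy2: "y^2 < x^2" using assms power_strict_mono[of "-y" "-x" 2] by simp
  have e: "1+d^2-x^2 > 0" "1+d^2-x^2 < 1+d^2-y^2" using assms xy2 by auto
  have h1: "A*(x^2-1) = (1-N*x)^2*(1+d^2-x^2)" "A*(y^2-1) = (1-N*y)^2*(1+d^2-y^2)"
    using assms unfolding Pr_def by (simp_all add: algebra_simps)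
  have "A*(x^2-1)*(y^2-1) = (1-N*x)^2*(y^2-1)*(1+d^2-x^2)" using h1 by simp
  also have "\<dots> < (1-N*y)^2*(x^2-1)*(1+d^2-x^2)" using bx e by simp
  also have "\<dots> \<le> (1-N*y)^2*(x^2-1)*(1+d^2-y^2)" using e y2
    by (intro mult_left_mono) auto
  also have "\<dots> = A*(y^2-1)*(x^2-1)" using h1 by simp
  finally show False by (simp add: algebra_simps)
qed

lemma dpos:
  assumes "0<N" "0<d" "1<x" "x^2 < 1+d^2" "N^2*(1+d^2) \<le> 1" "Pr N d A x = 0"
  shows "Pd N d A x \<noteq> 0"
proof
  assume "Pd N d A x = 0"
  hence "2*(1-N*x)*(-N*(x^2-1)^2 + d^2*(x-N)) = 0" using deriv_ident[of x N d A] assms by simp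
  moreover have y1: "N*x < 1" using Ny_lt1[of N x d] assms by simp
  moreover have "-N*(x^2-1)^2 + d^2*(x-N) > 0"
  proof -
    have p: "x^2 - 1 > 0" using assms sq_gt1' by auto
    have "(x^2-1)^2 = (x^2-1)*(x^2-1)" by (simp add: power2_eq_square)
    also have "\<dots> < d^2*(x^2-1)" using p assms by simp
    finally have "-N*(x^2-1)^2 > -N*(d^2*(x^2-1))" using assms by simp
    moreover have "-N*(d^2*(x^2-1)) + d^2*(x-N) = d^2*(x*(1-N*x))" by (simp add: algebra_simps power2_eq_square)
    moreover have "d^2*(x*(1-N*x)) > 0" using assms y1 by simp
    ultimately show ?thesis by linarith
  qed
  ultimately show False by simp
qed
lemma root_facts:
  assumes "0<N" "N<1" "0<d" "0<A" "Pr N d A x = 0"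
  shows "x < -1 \<or> 1 < x" "x^2 < 1+d^2"
proof -
  show "x < -1 \<or> 1 < x" using mid_neg[of N d A x] assms by (cases "\<bar>x\<bar> \<le> 1") auto
  show "x^2 < 1+d^2" using out_pos[of d A x N] assms by (cases "x^2 \<ge> 1+d^2") auto
qed

lemma real_roots:
  assumes "0<N" "N<1" "0<d" "0<A" "N^2*(1+d^2) \<le> 1"
  obtains r1 r2 where "r1 < -1" "1 < r2" "Pr N d A r1 = 0" "Pr N d A r2 = 0"
    "\<forall>x. Pr N d A x = 0 \<longrightarrow> x = r1 \<or> x = r2" "Pd N d A r1 \<noteq> 0" "Pd N d A r2 \<noteq> 0"
proof -
  define s where "s = sqrt (1+d^2)"
  have s2: "s^2 = 1+d^2" unfolding s_def by simp
  have "1 < 1 + d^2" using assms by simp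
  hence s1: "1 < s" unfolding s_def by (simp add: real_less_rsqrt)
  have cont: "continuous_on S (Pr N d A)" for S
    unfolding Pr_def[abs_def] by (intro continuous_intros)
  have ps: "Pr N d A s > 0" "Pr N d A (-s) > 0" using out_pos[of d A _ N] assms s2 by auto
  have p1: "Pr N d A 1 < 0" "Pr N d A (-1) < 0" using mid_neg[of N d A] assms by auto
  obtain r1 where r1: "-s \<le> r1" "r1 \<le> -1" "Pr N d A r1 = 0"
    using IVT2'[of "Pr N d A" "-1" 0 "-s", OF _ _ _ cont] ps p1 s1 by auto
  obtain r2 where r2: "1 \<le> r2" "r2 \<le> s" "Pr N d A r2 = 0"
    using IVT'[of "Pr N d A" 1 0 s, OF _ _ _ cont] ps p1 s1 by auto
  have r1': "r1 < -1" using r1 p1 by (cases "r1 = -1") auto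
  have r2': "1 < r2" using r2 p1 by (cases "r2 = 1") auto
  have q1: "r1^2 < 1+d^2" "r2^2 < 1+d^2" using root_facts assms r1 r2 by auto
  have all: "x = r1 \<or> x = r2" if "Pr N d A x = 0" for x
  proof -
    have f: "x < -1 \<or> 1 < x" "x^2 < 1+d^2" using root_facts assms that by auto
    show ?thesis
    proof (cases "x < -1")
      case True
      show ?thesis
      proof (rule ccontr)
        assume "\<not> ?thesis"
        hence "x < r1 \<or> r1 < x" by auto
        thus False
          using uniq_neg[of N A x r1 d] uniq_neg[of N A r1 x d] assms True r1' f q1 r1 that by auto
      qed
    next
      case False
      hence x1: "1 < x" using f by auto
      show ?thesis
      proof (rule ccontr)
        assume "\<not> ?thesis"
        hence "x < r2 \<or> r2 < x" by auto
        thus False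
          using uniq_pos[of N A x r2 d] uniq_pos[of N A r2 x d] assms x1 r2' f q1 r2 that by auto
      qed
    qed
  qed
  show ?thesis
    apply (rule that[OF r1' r2' r1(3) r2(3)])
    using all apply blast
    using dneg[of N r1 d A] assms r1' r1 apply simp
    using dpos[of N d r2 A] assms r2' r2 q1 by simp
qed
theorem proposition1:
  fixes N d A :: real
  assumes "0 < N" and "N < 1" and "0 < d" and "d^2 \<le> 1 / N^2 - 1" and "0 < A"
  shows "(\<Sum>z\<in>{z. poly (kh_quartic N d A) z = 0 \<and> z \<in> \<real>}. order z (kh_quartic N d A)) = 2
       \<and> (\<Sum>z\<in>{z. poly (kh_quartic N d A) z = 0 \<and> z \<notin> \<real>}. order z (kh_quartic N d A)) = 2"
proof -
  define p where "p = kh_quartic N d A"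
  have "N^2*d^2 \<le> N^2*(1/N^2 - 1)" using assms by (simp add: mult_left_mono)
  also have "\<dots> = 1 - N^2" using assms by (simp add: field_simps)
  finally have N2: "N^2*(1+d^2) \<le> 1" by (simp add: algebra_simps)
  obtain r1 r2 where r: "r1 < -1" "1 < r2" "Pr N d A r1 = 0" "Pr N d A r2 = 0"
    "\<forall>x. Pr N d A x = 0 \<longrightarrow> x = r1 \<or> x = r2" "Pd N d A r1 \<noteq> 0" "Pd N d A r2 \<noteq> 0"
    using real_roots[OF assms(1,2,3,5) N2] by blast
  have deg: "degree p = 4" unfolding p_def kq using assms by simp
  hence p0: "p \<noteq> 0" by auto
  define S where "S = {z. poly p z = 0}"
  have fin: "finite S" unfolding S_def using poly_roots_finite[OF p0] .
  have tot: "(\<Sum>z\<in>S. order z p) = 4"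
  proof -
    have "size (proots p) = 4" using size_proots_complex deg by simp
    moreover have "size (proots p) = (\<Sum>z\<in>S. order z p)"
      unfolding size_multiset_overloaded_eq S_def using p0 by simp
    ultimately show ?thesis by simp
  qed
  have Rset: "{z. poly p z = 0 \<and> z \<in> \<real>} = {complex_of_real r1, complex_of_real r2}"
  proof
    show "{z. poly p z = 0 \<and> z \<in> \<real>} \<subseteq> {complex_of_real r1, complex_of_real r2}"
    proof
      fix z assume "z \<in> {z. poly p z = 0 \<and> z \<in> \<real>}"
      then obtain x where x: "z = complex_of_real x" "poly p (complex_of_real x) = 0"
        by (auto elim: Reals_cases)
      hence "Pr N d A x = 0" unfolding p_def poly_kq by simp
      thus "z \<in> {complex_of_real r1, complex_of_real r2}" using r(5) x by auto
    qed
    show "{complex_of_real r1, complex_of_real r2} \<subseteq> {z. poly p z = 0 \<and> z \<in> \<real>}"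
      unfolding p_def using poly_kq r by auto
  qed
  have ord1: "order (complex_of_real x) p = 1" if "Pr N d A x = 0" "Pd N d A x \<noteq> 0" for x
  proof -
    have pz: "poly p (complex_of_real x) = 0" unfolding p_def poly_kq using that by simp
    have "poly (pderiv p) (complex_of_real x) \<noteq> 0" unfolding p_def poly_dkq using that by simp
    hence "order (complex_of_real x) (pderiv p) = 0" using order_root by blast
    thus ?thesis using order_pderiv[OF p0 pz] by simp
  qed
  have ne: "complex_of_real r1 \<noteq> complex_of_real r2" using r by simp
  have realsum: "(\<Sum>z\<in>{z. poly p z = 0 \<and> z \<in> \<real>}. order z p) = 2"
    unfolding Rset using ne ord1[of r1] ord1[of r2] r by simp
  have split: "S = {z. poly p z = 0 \<and> z \<in> \<real>} \<union> {z. poly p z = 0 \<and> z \<notin> \<real>}"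
    unfolding S_def by auto
  have "(\<Sum>z\<in>S. order z p) = (\<Sum>z\<in>{z. poly p z = 0 \<and> z \<in> \<real>}. order z p)
      + (\<Sum>z\<in>{z. poly p z = 0 \<and> z \<notin> \<real>}. order z p)"
    unfolding split using fin split by (intro sum.union_disjoint) auto
  hence "(\<Sum>z\<in>{z. poly p z = 0 \<and> z \<notin> \<real>}. order z p) = 2" using tot realsum by simp
  thus ?thesis using realsum unfolding p_def by simp
qed
end
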